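(* Fix $\rho>0$, integers $M\ge N\ge1$ and scalars $c_0,\dots,c_{N-1}>0$. Then for all $A\in\mathbb{P}_N(\overline{D}(0,\rho))$, $$A^{\circ M}\le\mathcal{C}(\mathbf{c};z^M;N,\rho)\cdot\bigl(c_0\mathbf{1}_{N\times N}+c_1A+\cdots+c_{N-1}A^{\circ(N-1)}\bigr)$$ in the Loewner order. Moreover the constant $\mathcal{C}(\mathbf{c};z^M;N,\rho)$ is sharp: it is the smallest constant for which this inequality holds for all such $A$.
   Context: $\mathbb{P}_N(\overline{D}(0,\rho))$ is the set of $N\times N$ Hermitian positive semidefinite matrices with entries in the closed disc of radius $\rho$ about $0$. $A^{\circ n}$ is the entrywise $n$-th power; $\mathbf{1}_{N\times N}$ is the all-ones matrix. $B\le C$ means $C-B$ is positive semidefinite. For $\mathbf{c}=(c_0,\dots,c_{N-1})$ with $c_j>0$ and $M\ge N$, $\mathcal{C}(\mathbf{c};z^M;N,\rho):=\sum_{j=0}^{N-1}\binom{M}{j}^2\binom{M-j-1}{N-j-1}^2\rho^{M-j}/c_j$. *)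

theory Defs
  imports Complex_Main
begin

text \<open>N x N complex matrices are represented as functions nat \<Rightarrow> nat \<Rightarrow> complex;
  only entries with indices i, j < N are relevant.\<close>

definition hermitian :: "nat \<Rightarrow> (nat \<Rightarrow> nat \<Rightarrow> complex) \<Rightarrow> bool" where
  "hermitian N A \<longleftrightarrow> (\<forall>i<N. \<forall>j<N. A j i = cnj (A i j))"

definition psd :: "nat \<Rightarrow> (nat \<Rightarrow> nat \<Rightarrow> complex) \<Rightarrow> bool" where
  "psd N A \<longleftrightarrow> hermitian N A \<and>
     (\<forall>v :: nat \<Rightarrow> complex. 0 \<le> Re (\<Sum>i<N. \<Sum>j<N. cnj (v i) * A i j * v j))"

definition loewner_le :: "nat \<Rightarrow> (nat \<Rightarrow> nat \<Rightarrow> complex) \<Rightarrow> (nat \<Rightarrow> nat \<Rightarrow> complex) \<Rightarrow> bool" where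
  "loewner_le N B C \<longleftrightarrow> psd N (\<lambda>i j. C i j - B i j)"

definition PN :: "nat \<Rightarrow> real \<Rightarrow> (nat \<Rightarrow> nat \<Rightarrow> complex) \<Rightarrow> bool" where
  "PN N \<rho> A \<longleftrightarrow> psd N A \<and> (\<forall>i<N. \<forall>j<N. cmod (A i j) \<le> \<rho>)"

text \<open>Entrywise (Hadamard) power; hpow A 0 is the all-ones matrix.\<close>
definition hpow :: "(nat \<Rightarrow> nat \<Rightarrow> complex) \<Rightarrow> nat \<Rightarrow> (nat \<Rightarrow> nat \<Rightarrow> complex)" where
  "hpow A n = (\<lambda>i j. (A i j) ^ n)"

definition Cconst :: "(nat \<Rightarrow> real) \<Rightarrow> nat \<Rightarrow> nat \<Rightarrow> real \<Rightarrow> real" where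
  "Cconst c M N \<rho> = (\<Sum>j<N. real (M choose j) ^ 2 * real ((M - j - 1) choose (N - j - 1)) ^ 2
       * \<rho> ^ (M - j) / c j)"

definition rhs :: "nat \<Rightarrow> (nat \<Rightarrow> real) \<Rightarrow> real \<Rightarrow> (nat \<Rightarrow> nat \<Rightarrow> complex) \<Rightarrow> (nat \<Rightarrow> nat \<Rightarrow> complex)" where
  "rhs N c t A = (\<lambda>i j. complex_of_real t * (\<Sum>k<N. complex_of_real (c k) * hpow A k i j))"

end

theory Submission
  imports Defs "HOL-Analysis.Analysis" "HOL-Computational_Algebra.Polynomial"
begin

fun ee :: "nat \<Rightarrow> 'a::comm_ring_1 list \<Rightarrow> 'a" where
  "ee b [] = (if b = 0 then 1 else 0)"
| "ee b (x#xs) = ee b xs + (if b = 0 then 0 else x * ee (b-1) xs)"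

fun hh :: "nat \<Rightarrow> 'a::comm_ring_1 list \<Rightarrow> 'a" where
  "hh m [] = (if m = 0 then 1 else 0)"
| "hh m (x#xs) = (\<Sum>j\<le>m. x^j * hh (m-j) xs)"

fun TT :: "nat \<Rightarrow> nat \<Rightarrow> 'a::comm_ring_1 list \<Rightarrow> 'a" where
  "TT a b [] = 0"
| "TT a b (x#xs) = TT a b xs + x * hh (a-1) (x#xs) * ee b xs"

lemma ee_0[simp]: "ee 0 xs = 1"
  by (induction xs) auto

lemma ee_big: "length xs < b \<Longrightarrow> ee b xs = 0"
  by (induction xs arbitrary: b) auto

lemma hh_0[simp]: "hh 0 xs = 1"
  by (induction xs) auto

lemma hh_rec: "hh (Suc m) (x#xs) = hh (Suc m) xs + x * hh m (x#xs)"
proof -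
  have "hh (Suc m) (x#xs) = (\<Sum>j\<le>Suc m. x^j * hh (Suc m - j) xs)" by simp
  also have "\<dots> = hh (Suc m) xs + (\<Sum>j\<le>m. x^(Suc j) * hh (m - j) xs)"
    by (subst sum.atMost_Suc_shift) simp
  also have "(\<Sum>j\<le>m. x^(Suc j) * hh (m - j) xs) = x * hh m (x#xs)"
    by (simp add: sum_distrib_left mult.assoc)
  finally show ?thesis .
qed

declare hh.simps(2)[simp del]

lemma TT_1: "TT 1 b xs = ee (Suc b) xs"
  by (induction xs) auto

lemma TT_a0: "1 \<le> a \<Longrightarrow> TT a 0 xs = hh a xs"
proof (induction xs)
  case Nil then show ?case by simp
next
  case (Cons x xs)
  then obtain m where a: "a = Suc m" by (cases a) auto
  show ?case using Cons by (simp add: a hh_rec)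
qed

lemma TT_big: "length xs \<le> b \<Longrightarrow> TT a b xs = 0"
  by (induction xs) (auto simp: ee_big)

lemma TT_I1: "1 \<le> a \<Longrightarrow> TT (Suc a) b xs + TT a (Suc b) xs = hh a xs * ee (Suc b) xs"
proof (induction xs)
  case Nil then show ?case by simp
next
  case (Cons x xs)
  then obtain m where a: "a = Suc m" by (cases a) auto
  have "TT (Suc a) b (x#xs) + TT a (Suc b) (x#xs)
     = (TT (Suc a) b xs + TT a (Suc b) xs) + x * hh a (x#xs) * ee b xs + x * hh m (x#xs) * ee (Suc b) xs"
    by (simp add: a algebra_simps)
  also have "\<dots> = hh a xs * ee (Suc b) xs + x * hh a (x#xs) * ee b xs + x * hh m (x#xs) * ee (Suc b) xs"
    using Cons by simp
  also have "\<dots> = hh a (x#xs) * ee (Suc b) (x#xs)"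
    by (simp add: a hh_rec algebra_simps)
  finally show ?case .
qed

definition qc :: "'a::comm_ring_1 list \<Rightarrow> nat \<Rightarrow> 'a" where
  "qc u k = (if k \<le> length u then (-1)^(length u - k) * ee (length u - k) u else 0)"

lemma qc_rec: "qc (y#u) k = (if k = 0 then 0 else qc u (k-1)) - y * qc u k"
proof -
  let ?n = "length u"
  consider "k = 0" | "0 < k" "k \<le> ?n" | "k = Suc ?n" | "k > Suc ?n" by linarith
  then show ?thesis
  proof cases
    case 1 then show ?thesis by (simp add: qc_def ee_big)
  next
    case 2
    then obtain j where j: "?n - k = j" "?n - (k-1) = Suc j" by auto
    with 2 show ?thesis by (auto simp: qc_def Suc_diff_le algebra_simps)
  next
    case 3 then show ?thesis by (simp add: qc_def)
  next
    case 4 then show ?thesis by (simp add: qc_def)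
  qed
qed

lemma qc_top: "qc u (length u) = 1"
  by (simp add: qc_def)

lemma vieta: "(\<Sum>k\<le>length u. qc u k * x^k) = prod_list (map (\<lambda>y. x - y) u)"
proof (induction u)
  case Nil then show ?case by (simp add: qc_def)
next
  case (Cons y u)
  let ?n = "length u"
  have "(\<Sum>k\<le>length (y#u). qc (y#u) k * x^k)
      = (\<Sum>k\<le>Suc ?n. (if k = 0 then 0 else qc u (k-1)) * x^k) - y * (\<Sum>k\<le>Suc ?n. qc u k * x^k)"
    by (simp add: qc_rec sum_subtractf sum_distrib_left algebra_simps)
  also have "(\<Sum>k\<le>Suc ?n. (if k = 0 then 0 else qc u (k-1)) * x^k) = x * (\<Sum>k\<le>?n. qc u k * x^k)"
    by (subst sum.atMost_Suc_shift) (simp add: sum_distrib_left algebra_simps)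
  also have "(\<Sum>k\<le>Suc ?n. qc u k * x^k) = (\<Sum>k\<le>?n. qc u k * x^k)"
    by (simp add: qc_def)
  finally show ?case using Cons by (simp add: algebra_simps)
qed

lemma prod_list_root: "x \<in> set u \<Longrightarrow> prod_list (map (\<lambda>y. x - y) u) = (0::'a::comm_ring_1)"
  by (induction u) auto

lemma qc_root: "x \<in> set u \<Longrightarrow> (\<Sum>k\<le>length u. qc u k * x^k) = 0"
  by (simp add: vieta prod_list_root)

fun beta :: "'a::comm_ring_1 list \<Rightarrow> nat \<Rightarrow> nat \<Rightarrow> 'a" where
  "beta u 0 k = (if k = 0 then 1 else 0)"
| "beta u (Suc M) k = (if k = 0 then 0 else beta u M (k-1)) - beta u M (length u - 1) * qc u k"

lemma beta_root:
  assumes "1 \<le> length u" "x \<in> set u"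
  shows "x^M = (\<Sum>k<length u. beta u M k * x^k)"
proof (induction M)
  case 0
  have "(\<Sum>k<length u. (if k = 0 then 1 else 0) * x ^ k) = (\<Sum>k<length u. if k = 0 then 1 else 0)"
    by (rule sum.cong) auto
  then show ?case using assms by (cases u) auto
next
  case (Suc M)
  let ?n = "length u"
  obtain m where n: "?n = Suc m" using assms by (cases ?n) auto
  have sp: "(\<Sum>k\<le>?n. qc u k * x^k) = (\<Sum>k<?n. qc u k * x^k) + x^?n"
    by (simp add: lessThan_Suc_atMost[symmetric] qc_top del: lessThan_Suc_atMost)
  have root: "x^?n = - (\<Sum>k<?n. qc u k * x^k)"
    using qc_root[OF assms(2)] sp by (simp add: add_eq_0_iff)
  have "x^Suc M = (\<Sum>k<?n. beta u M k * x^Suc k)"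
    using Suc by (simp add: sum_distrib_left algebra_simps)
  also have "\<dots> = (\<Sum>k<m. beta u M k * x^Suc k) + beta u M m * x^?n"
    by (simp add: n)
  also have "(\<Sum>k<m. beta u M k * x^Suc k) = (\<Sum>k<?n. (if k = 0 then 0 else beta u M (k-1)) * x^k)"
    by (simp add: n lessThan_Suc_eq_insert_0 sum.reindex)
  also have "beta u M m * x^?n = - (\<Sum>k<?n. beta u M m * qc u k * x^k)"
    by (simp add: root sum_distrib_left mult.assoc)
  finally have "x^Suc M = (\<Sum>k<?n. (if k = 0 then 0 else beta u M (k-1)) * x^k) - (\<Sum>k<?n. beta u M m * qc u k * x^k)"
    by simp
  also have "\<dots> = (\<Sum>k<?n. beta u (Suc M) k * x^k)"
    by (simp add: n sum_subtractf[symmetric] algebra_simps del: sum.lessThan_Suc)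
  finally show ?case .
qed

lemma beta_small: "M < length u \<Longrightarrow> beta u M k = (if k = M then 1 else 0)"
  by (induction M arbitrary: k) auto

lemma beta_n: assumes "1 \<le> length u" "k < length u" shows "beta u (length u) k = - qc u k"
proof -
  obtain m where n: "length u = Suc m" using assms by (cases "length u") auto
  show ?thesis using assms by (simp add: n beta_small; linarith)
qed

lemma beta_T:
  assumes "1 \<le> length u" "length u \<le> M"
  shows "\<forall>k<length u. beta u M k = (-1)^(length u - 1 - k) * TT (M - length u + 1) (length u - 1 - k) u"
  using assms(2)
proof (induction M rule: dec_induct)
  case base
  show ?case
  proof (intro allI impI)
    fix k assume k: "k < length u"
    then obtain b where b: "length u - k = Suc b" "length u - 1 - k = b" "length u - Suc k = b"
      by (metis Suc_diff_Suc diff_Suc_1 diff_commute zero_less_diff diff_Suc_eq_diff_pred)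
    show "beta u (length u) k = (-1)^(length u - 1 - k) * TT (length u - length u + 1) (length u - 1 - k) u"
      using assms k TT_1[of b u] by (simp add: beta_n qc_def b)
  qed
next
  case (step M)
  let ?n = "length u"
  define a where "a = M - ?n + 1"
  have a1: "1 \<le> a" and aS: "Suc M - ?n + 1 = Suc a" using step by (auto simp: a_def)
  obtain m where n: "?n = Suc m" using assms by (cases ?n) auto
  have aS2: "Suc (M - m) = Suc a" using step n by (simp add: a_def)
  have "beta u M (?n - 1) = (-1)^(?n - 1 - (?n - 1)) * TT (M - ?n + 1) (?n - 1 - (?n - 1)) u"
    using step(3) n by auto
  then have "beta u M (?n - 1) = (-1)^(?n - 1 - (?n - 1)) * TT a (?n - 1 - (?n - 1)) u"
    unfolding a_def .
  then have top: "beta u M (?n - 1) = hh a u"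
    by (simp add: TT_a0[OF a1])
  show ?case
  proof (intro allI impI)
    fix k assume k: "k < ?n"
    show "beta u (Suc M) k = (-1)^(?n - 1 - k) * TT (Suc M - ?n + 1) (?n - 1 - k) u"
    proof (cases k)
      case 0
      have I: "TT (Suc a) m u = hh a u * ee (Suc m) u"
        using TT_I1[OF a1, of m u] TT_big[of u "Suc m" a] n by simp
      show ?thesis
        using top by (simp add: 0 aS aS2 qc_def n I)
    next
      case (Suc j)
      then obtain b where b: "?n - k = Suc b" "?n - 1 - k = b" "?n - 1 - j = Suc b"
        using k n by (metis Suc_diff_Suc diff_Suc_1 diff_Suc_Suc)
      have prev: "beta u M j = (-1)^(Suc b) * TT a (Suc b) u"
        using step(3) k Suc b by (simp add: a_def)
      have I: "TT (Suc a) b u = hh a u * ee (Suc b) u - TT a (Suc b) u"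
        using TT_I1[OF a1, of b u] by (simp add: algebra_simps)
      have q: "qc u k = (-1)^(Suc b) * ee (Suc b) u"
        using k b by (simp add: qc_def)
      have "beta u (Suc M) k = beta u M j - beta u M (?n - 1) * qc u k"
        by (simp add: Suc)
      also have "\<dots> = (-1)^b * TT (Suc a) b u"
        unfolding prev top q I by (simp add: algebra_simps)
      finally show ?thesis by (simp only: b aS)
    qed
  qed
qed

lemma ee_rep: "ee b (replicate n x) = of_nat (n choose b) * x^b"
proof (induction n arbitrary: b)
  case 0 then show ?case by (cases b) auto
next
  case (Suc n)
  show ?case
  proof (cases b)
    case 0 then show ?thesis by simp
  next
    case (Suc c)
    show ?thesis using Suc.IH by (simp add: Suc algebra_simps)
  qed
qed

lemma hh_rep: "hh m (replicate n x) = of_nat ((n + m - 1) choose m) * x^m"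
proof (induction n arbitrary: m)
  case 0 then show ?case by (cases m) (auto simp: binomial_eq_0)
next
  case (Suc n)
  note IHn = Suc.IH
  show ?case
  proof (induction m)
    case 0 then show ?case by simp
  next
    case (Suc m)
    have "hh (Suc m) (replicate (Suc n) x) = hh (Suc m) (replicate n x) + x * hh m (replicate (Suc n) x)"
      by (simp add: hh_rec)
    also have "\<dots> = of_nat ((n + m) choose Suc m) * x^Suc m + of_nat ((n + m) choose m) * x^Suc m"
      using Suc.IH IHn[of "Suc m"] by (simp add: algebra_simps)
    finally show ?case by (simp add: algebra_simps)
  qed
qed

lemma choose_aux: "(n + a choose (a + b)) * ((a + b) choose b) = (n + a choose a) * (n choose b)"
proof (cases "b \<le> n")
  case True
  have "(n + a choose (a + b)) * ((a + b) choose a) = (n + a choose a) * ((n + a - a) choose (a + b - a))"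
    by (rule choose_mult) (use True in auto)
  moreover have "(a + b) choose a = (a + b) choose b"
    by (metis add_diff_cancel_left' binomial_symmetric le_add1)
  ultimately show ?thesis by simp
next
  case False
  then show ?thesis by (simp add: binomial_eq_0)
qed

lemma TT_rep:
  assumes "1 \<le> a"
  shows "TT a b (replicate n x) = of_nat (((n + a - 1) choose (a + b)) * ((a + b - 1) choose b)) * x^(a+b)"
proof (induction n)
  case 0
  show ?case using assms by (simp add: binomial_eq_0)
next
  case (Suc n)
  obtain c where a: "a = Suc c" using assms by (cases a) auto
  have h: "hh c (x # replicate n x) = of_nat ((n + c) choose c) * x^c"
    using hh_rep[of c "Suc n" x] by (simp add: a)
  have "TT a b (replicate (Suc n) x) = TT a b (replicate n x) + x * hh (a-1) (replicate (Suc n) x) * ee b (replicate n x)"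
    by simp
  also have "\<dots> = of_nat (((n + c) choose Suc (c + b)) * ((c + b) choose b) + ((n + c) choose c) * (n choose b)) * x^(a+b)"
    using Suc.IH by (simp add: h ee_rep a algebra_simps power_add)
  also have "(((n + c) choose Suc (c + b)) * ((c + b) choose b) + ((n + c) choose c) * (n choose b))
      = ((Suc n + a - 1) choose (a + b)) * ((a + b - 1) choose b)"
    using choose_aux[of n c b] by (simp add: a algebra_simps)
  finally show ?case .
qed

lemma TT_rep':
  assumes "1 \<le> a" "N' = n + a - 1" "D = a + b"
  shows "TT a b (replicate n x) = of_nat ((N' choose D) * ((D - 1) choose b)) * x^D"
  using TT_rep[OF assms(1)] assms(2,3) by simp

lemma ee_nonneg: "(\<forall>y\<in>set xs. (0::real) \<le> y) \<Longrightarrow> 0 \<le> ee b xs"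
  by (induction xs arbitrary: b) auto

lemma hh_nonneg: "(\<forall>y\<in>set xs. (0::real) \<le> y) \<Longrightarrow> 0 \<le> hh m xs"
  by (induction xs arbitrary: m) (auto simp: hh.simps(2) intro!: sum_nonneg)

lemma TT_nonneg: "(\<forall>y\<in>set xs. (0::real) \<le> y) \<Longrightarrow> 0 \<le> TT a b xs"
  by (induction xs) (auto intro!: add_nonneg_nonneg mult_nonneg_nonneg ee_nonneg hh_nonneg)

lemma norm_ee: "(\<forall>y\<in>set u. norm y \<le> r) \<Longrightarrow> 0 \<le> r \<Longrightarrow> norm (ee b (u::complex list)) \<le> ee b (replicate (length u) r)"
proof (induction u arbitrary: b)
  case Nil then show ?case by simp
next
  case (Cons x xs)
  have "norm (ee b (x#xs)) \<le> norm (ee b xs) + (if b = 0 then 0 else norm x * norm (ee (b-1) xs))"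
    by (auto intro: norm_triangle_ineq[THEN order_trans] simp: norm_mult)
  also have "\<dots> \<le> ee b (replicate (length xs) r) + (if b = 0 then 0 else r * ee (b-1) (replicate (length xs) r))"
    using Cons by (auto intro!: add_mono mult_mono ee_nonneg)
  finally show ?case by simp
qed

lemma norm_hh: "(\<forall>y\<in>set u. norm y \<le> r) \<Longrightarrow> 0 \<le> r \<Longrightarrow> norm (hh m (u::complex list)) \<le> hh m (replicate (length u) r)"
proof (induction u arbitrary: m)
  case Nil then show ?case by simp
next
  case (Cons x xs)
  have "norm (hh m (x#xs)) \<le> (\<Sum>j\<le>m. norm x ^ j * norm (hh (m-j) xs))"
    by (simp add: hh.simps(2)) (rule order_trans[OF norm_sum], simp add: norm_mult norm_power)
  also have "\<dots> \<le> (\<Sum>j\<le>m. r ^ j * hh (m-j) (replicate (length xs) r))"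
    using Cons by (auto intro!: sum_mono mult_mono power_mono hh_nonneg)
  finally show ?case by (simp add: hh.simps(2))
qed

lemma norm_TT: "(\<forall>y\<in>set u. norm y \<le> r) \<Longrightarrow> 0 \<le> r \<Longrightarrow> norm (TT a b (u::complex list)) \<le> TT a b (replicate (length u) r)"
proof (induction u)
  case Nil then show ?case by simp
next
  case (Cons x xs)
  have h: "norm (hh (a-1) (x#xs)) \<le> hh (a-1) (replicate (Suc (length xs)) r)"
    using norm_hh[OF Cons.prems] by simp
  have e: "norm (ee b xs) \<le> ee b (replicate (length xs) r)"
    using norm_ee Cons.prems by auto
  have "norm (TT a b (x#xs)) \<le> norm (TT a b xs) + norm x * norm (hh (a-1) (x#xs)) * norm (ee b xs)"
    by (auto intro: norm_triangle_ineq[THEN order_trans] simp: norm_mult)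
  also have "\<dots> \<le> TT a b (replicate (length xs) r) + r * hh (a-1) (replicate (Suc (length xs)) r) * ee b (replicate (length xs) r)"
    using Cons h e by (auto intro!: add_mono mult_mono ee_nonneg hh_nonneg mult_nonneg_nonneg)
  finally show ?case by simp
qed

lemma beta_bound:
  fixes u :: "complex list"
  assumes "1 \<le> length u" "length u \<le> M" "k < length u" "\<forall>y\<in>set u. norm y \<le> r" "0 \<le> r"
  shows "norm (beta u M k) \<le> real ((M choose k) * ((M - k - 1) choose (length u - k - 1))) * r^(M-k)"
proof -
  let ?n = "length u"
  have "norm (beta u M k) = norm (TT (M - ?n + 1) (?n - 1 - k) u)"
    using beta_T[OF assms(1,2)] assms(3) by (simp add: norm_mult norm_power)
  also have "\<dots> \<le> TT (M - ?n + 1) (?n - 1 - k) (replicate ?n r)"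
    using norm_TT assms by auto
  also have "\<dots> = real ((M choose (M - k)) * ((M - k - 1) choose (?n - 1 - k))) * r^(M-k)"
    by (rule TT_rep') (use assms in auto)
  also have "\<dots> = real ((M choose k) * ((M - k - 1) choose (?n - k - 1))) * r^(M-k)"
    using assms by (simp add: binomial_symmetric[symmetric])
  finally show ?thesis .
qed

definition qf :: "nat \<Rightarrow> (nat \<Rightarrow> nat \<Rightarrow> complex) \<Rightarrow> (nat \<Rightarrow> complex) \<Rightarrow> complex" where
  "qf n A v = (\<Sum>i<n. \<Sum>j<n. cnj (v i) * A i j * v j)"

lemma psd_iff: "psd n A \<longleftrightarrow> hermitian n A \<and> (\<forall>v. 0 \<le> Re (qf n A v))"
  by (simp add: psd_def qf_def)

lemma psd_herm: "psd n A \<Longrightarrow> hermitian n A"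
  by (simp add: psd_iff)

lemma hermD: "hermitian n A \<Longrightarrow> i < n \<Longrightarrow> j < n \<Longrightarrow> A j i = cnj (A i j)"
  unfolding hermitian_def by blast

lemma hermI: "(\<And>i j. i < n \<Longrightarrow> j < n \<Longrightarrow> A j i = cnj (A i j)) \<Longrightarrow> hermitian n A"
  unfolding hermitian_def by blast

lemma qf_diff: "qf n (\<lambda>i j. A i j - B i j) v = qf n A v - qf n B v"
  by (simp add: qf_def sum_subtractf algebra_simps)

lemma qf_add: "qf n (\<lambda>i j. A i j + B i j) v = qf n A v + qf n B v"
  by (simp add: qf_def sum.distrib algebra_simps)

lemma qf_scale: "qf n (\<lambda>i j. c * A i j) v = c * qf n A v"
  by (simp add: qf_def sum_distrib_left algebra_simps)

lemma qf_rank1: "qf n (\<lambda>i j. z i * cnj (z j)) v = (\<Sum>i<n. cnj (v i) * z i) * cnj (\<Sum>i<n. cnj (v i) * z i)"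
  unfolding qf_def cnj_sum sum_product by (simp add: mult_ac)

lemma Re_mult_cnj: "Re (s * cnj s) = (cmod s)^2"
  by (simp add: complex_mult_cnj cmod_power2)

lemma psd_rank1: "psd n (\<lambda>i j. z i * cnj (z j))"
  unfolding psd_iff hermitian_def qf_rank1 Re_mult_cnj by simp

lemma psd_add:
  assumes "psd n A" "psd n B" shows "psd n (\<lambda>i j. A i j + B i j)"
proof -
  have "hermitian n (\<lambda>i j. A i j + B i j)"
  proof (rule hermI)
    fix i j assume "i < n" "j < n"
    then show "A j i + B j i = cnj (A i j + B i j)"
      using hermD[OF psd_herm[OF assms(1)], of i j] hermD[OF psd_herm[OF assms(2)], of i j] by simp
  qed
  moreover have "0 \<le> Re (qf n (\<lambda>i j. A i j + B i j) v)" for v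
  proof -
    have "0 \<le> Re (qf n A v)" "0 \<le> Re (qf n B v)" using assms unfolding psd_iff by blast+
    then show ?thesis unfolding qf_add by simp
  qed
  ultimately show ?thesis unfolding psd_iff by blast
qed

lemma psd_scale:
  assumes "psd n A" "0 \<le> c" shows "psd n (\<lambda>i j. complex_of_real c * A i j)"
proof -
  have "hermitian n (\<lambda>i j. complex_of_real c * A i j)"
  proof (rule hermI)
    fix i j assume "i < n" "j < n"
    then show "complex_of_real c * A j i = cnj (complex_of_real c * A i j)"
      using hermD[OF psd_herm[OF assms(1)], of i j] by simp
  qed
  moreover have "0 \<le> Re (qf n (\<lambda>i j. complex_of_real c * A i j) v)" for v
  proof -
    have "0 \<le> Re (qf n A v)" using assms unfolding psd_iff by blast
    then show ?thesis unfolding qf_scale using assms(2) by simp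
  qed
  ultimately show ?thesis unfolding psd_iff by blast
qed

lemma psd_cong: "psd n A \<Longrightarrow> (\<And>i j. i < n \<Longrightarrow> j < n \<Longrightarrow> A i j = B i j) \<Longrightarrow> psd n B"
proof -
  assume p: "psd n A" and e: "\<And>i j. i < n \<Longrightarrow> j < n \<Longrightarrow> A i j = B i j"
  have "qf n A v = qf n B v" for v unfolding qf_def by (auto intro!: sum.cong simp: e)
  moreover have "hermitian n B"
  proof (rule hermI)
    fix i j assume "i < n" "j < n"
    then show "B j i = cnj (B i j)" using hermD[OF psd_herm[OF p], of i j] e[of i j] e[of j i] by simp
  qed
  ultimately show ?thesis using p unfolding psd_iff by metis
qed

lemma psd_restrict:
  assumes "psd n A" "m \<le> n" shows "psd m A"
proof -
  have "0 \<le> Re (qf m A v)" for v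
  proof -
    define w where "w i = (if i < m then v i else 0)" for i
    have "qf n A w = qf m A v"
    proof -
      have "qf n A w = (\<Sum>i<m. \<Sum>j<n. cnj (w i) * A i j * w j)"
        unfolding qf_def by (rule sum.mono_neutral_right) (use assms(2) in \<open>auto simp: w_def\<close>)
      also have "\<dots> = (\<Sum>i<m. \<Sum>j<m. cnj (w i) * A i j * w j)"
        by (rule sum.cong[OF refl], rule sum.mono_neutral_right) (use assms(2) in \<open>auto simp: w_def\<close>)
      also have "\<dots> = qf m A v" unfolding qf_def by (auto intro!: sum.cong simp: w_def)
      finally show ?thesis .
    qed
    then show ?thesis using assms(1) unfolding psd_iff by metis
  qed
  moreover have "hermitian m A"
    using assms(1,2) unfolding psd_iff hermitian_def by (meson order_less_le_trans)
  ultimately show ?thesis unfolding psd_iff by blast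
qed

lemma psd_extend:
  assumes "psd N A" "\<And>i. i \<le> N \<Longrightarrow> A i N = 0" "\<And>i. i \<le> N \<Longrightarrow> A N i = 0"
  shows "psd (Suc N) A"
proof -
  have h0: "hermitian N A" using assms(1) unfolding psd_iff by blast
  have h: "hermitian (Suc N) A" unfolding hermitian_def
  proof (intro allI impI)
    fix i j assume ij: "i < Suc N" "j < Suc N"
    show "A j i = cnj (A i j)"
    proof (cases "i = N \<or> j = N")
      case True
      have jN: "j \<le> N" "i \<le> N" using ij by auto
      show ?thesis
      proof (cases "i = N")
        case True
        then show ?thesis using assms(2)[OF jN(1)] assms(3)[OF jN(1)] by simp
      next
        case False
        then have "j = N" using \<open>i = N \<or> j = N\<close> by simp
        then show ?thesis using assms(2)[OF jN(2)] assms(3)[OF jN(2)] by simp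
      qed
    next
      case False then show ?thesis using hermD[OF h0, of i j] ij by simp
    qed
  qed
  have "qf (Suc N) A v = qf N A v" for v
  proof -
    have "qf (Suc N) A v = (\<Sum>i<N. \<Sum>j<Suc N. cnj (v i) * A i j * v j) + (\<Sum>j<Suc N. cnj (v N) * A N j * v j)"
      unfolding qf_def by (rule sum.lessThan_Suc)
    also have "(\<Sum>j<Suc N. cnj (v N) * A N j * v j) = 0"
      using assms(3) by (intro sum.neutral) auto
    also have "(\<Sum>i<N. \<Sum>j<Suc N. cnj (v i) * A i j * v j) = qf N A v"
      unfolding qf_def using assms(2) by (intro sum.cong[OF refl]) simp
    finally show ?thesis by simp
  qed
  then show ?thesis using h assms(1) unfolding psd_iff by simp
qed

lemma psd_diag: "psd n A \<Longrightarrow> i < n \<Longrightarrow> 0 \<le> Re (A i i)"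
proof -
  assume p: "psd n A" and i: "i < n"
  define v where "v j = (if j = i then 1 else 0::complex)" for j
  have "qf n A v = (\<Sum>j<n. if j = i then A i j else 0)"
    unfolding qf_def v_def using i by (intro sum.cong) (auto simp: if_distrib cong: if_cong)
  also have "\<dots> = A i i" using i by simp
  finally have "qf n A v = A i i" .
  then show ?thesis using p unfolding psd_iff by metis
qed

lemma sum_if_out: "(\<Sum>j\<in>S. if P then f j else 0) = (if P then (\<Sum>j\<in>S. f j) else 0)"
  by simp

lemma qf_shift:
  assumes "N < n"
  shows "qf n A (\<lambda>j. v j + (if j = N then \<alpha> else 0)) = qf n A v + \<alpha> * (\<Sum>i<n. cnj (v i) * A i N)
     + cnj \<alpha> * (\<Sum>j<n. A N j * v j) + cnj \<alpha> * \<alpha> * A N N"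
proof -
  have "qf n A (\<lambda>j. v j + (if j = N then \<alpha> else 0)) =
     (\<Sum>i<n. \<Sum>j<n. cnj (v i) * A i j * v j + (if j = N then cnj (v i) * A i j * \<alpha> else 0)
        + (if i = N then cnj \<alpha> * A i j * v j else 0) + (if i = N then (if j = N then cnj \<alpha> * A i j * \<alpha> else 0) else 0))"
    unfolding qf_def by (intro sum.cong refl) (auto simp: algebra_simps)
  also have "\<dots> = qf n A v + (\<Sum>i<n. cnj (v i) * A i N * \<alpha>) + (\<Sum>j<n. cnj \<alpha> * A N j * v j) + cnj \<alpha> * A N N * \<alpha>"
    unfolding sum.distrib sum_if_out using assms by (simp add: qf_def sum.delta)
  finally show ?thesis by (simp add: sum_distrib_left sum_distrib_right algebra_simps)
qed

lemma psd_decomp: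
  assumes p: "psd (Suc N) A"
  obtains z where "psd (Suc N) (\<lambda>i j. A i j - z i * cnj (z j))"
    "\<And>i. i \<le> N \<Longrightarrow> A i N - z i * cnj (z N) = 0"
    "\<And>i. i \<le> N \<Longrightarrow> A N i - z N * cnj (z i) = 0"
proof -
  let ?n = "Suc N"
  have h: "hermitian ?n A" using psd_herm[OF p] .
  define d where "d = Re (A N N)"
  have AN: "A N N = complex_of_real d"
    using hermD[OF h, of N N] unfolding d_def by (simp add: complex_eq_iff)
  have d0: "0 \<le> d" using psd_diag[OF p, of N] by (simp add: d_def)
  have herm_col: "A N i = cnj (A i N)" if "i \<le> N" for i
    using hermD[OF h, of i N] that by simp
  show ?thesis
  proof (cases "d = 0")
    case True
    have col0: "A i N = 0" if i: "i \<le> N" for i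
    proof (rule ccontr)
      assume a0: "A i N \<noteq> 0"
      then have iN: "i < N" using True AN i by (cases "i = N") auto
      define a where "a = A i N"
      define v where "v j = (if j = i then 1 else 0::complex)" for j
      define t where "t = (\<bar>Re (A i i)\<bar> + 1) / (2 * (cmod a)^2)"
      define \<alpha> where "\<alpha> = - complex_of_real t * cnj a"
      have qv: "qf ?n A v = A i i"
      proof -
        have "qf ?n A v = (\<Sum>j<?n. if j = i then A i j else 0)"
          unfolding qf_def v_def using iN by (intro sum.cong) (auto simp: if_distrib cong: if_cong)
        also have "\<dots> = A i i" using iN by simp
        finally show ?thesis .
      qed
      have "(\<Sum>k<?n. cnj (v k) * A k N) = (\<Sum>k<?n. if k = i then A k N else 0)"
        by (intro sum.cong) (auto simp: v_def)
      then have s1: "(\<Sum>k<?n. cnj (v k) * A k N) = a"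
        unfolding a_def using iN by simp
      have "(\<Sum>j<?n. A N j * v j) = (\<Sum>k<?n. if k = i then A N k else 0)"
        by (intro sum.cong) (auto simp: v_def)
      then have s2: "(\<Sum>j<?n. A N j * v j) = cnj a"
        unfolding a_def using iN herm_col[of i] by simp
      have "qf ?n A (\<lambda>j. v j + (if j = N then \<alpha> else 0)) = A i i + (\<alpha> * a + cnj \<alpha> * cnj a)"
        using qf_shift[of N ?n A v \<alpha>] qv s1 s2 True AN by simp
      moreover have aa: "a * cnj a = complex_of_real ((cmod a)^2)"
        by (simp add: complex_norm_square[symmetric])
      moreover have "\<alpha> * a + cnj \<alpha> * cnj a = - complex_of_real (2 * t * (cmod a)^2)"
        unfolding \<alpha>_def using aa by (simp add: algebra_simps)
      ultimately have "Re (qf ?n A (\<lambda>j. v j + (if j = N then \<alpha> else 0))) = Re (A i i) - 2 * t * (cmod a)^2"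
        by simp
      also have "\<dots> = Re (A i i) - (\<bar>Re (A i i)\<bar> + 1)"
        using a0 unfolding t_def a_def by (simp add: field_simps)
      also have "\<dots> < 0" by linarith
      finally show False using p unfolding psd_iff by (meson not_le)
    qed
    show ?thesis
    proof (rule that[of "\<lambda>_. 0"])
      show "psd ?n (\<lambda>i j. A i j - 0 * cnj 0)" using p by simp
      show "A i N - 0 * cnj 0 = 0" if "i \<le> N" for i using col0[OF that] by simp
      show "A N i - 0 * cnj 0 = 0" if "i \<le> N" for i using col0[OF that] herm_col[OF that] by simp
    qed
  next
    case False
    then have dpos: "0 < d" using d0 by simp
    define z where "z i = A i N / complex_of_real (sqrt d)" for i
    have sq: "complex_of_real (sqrt d) * complex_of_real (sqrt d) = complex_of_real d"
      using d0 by (simp flip: of_real_mult)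
    have zN: "z N = complex_of_real (sqrt d)"
      unfolding z_def AN of_real_divide[symmetric] real_div_sqrt[OF d0] ..
    have Z1: "A i N - z i * cnj (z N) = 0" for i
      unfolding zN unfolding z_def using dpos by simp
    have Z2: "A N i - z N * cnj (z i) = 0" if "i \<le> N" for i
      unfolding zN unfolding z_def using dpos herm_col[OF that] by (simp add: field_simps)
    have herm: "hermitian ?n (\<lambda>i j. A i j - z i * cnj (z j))"
    proof (rule hermI)
      fix i j assume "i < ?n" "j < ?n"
      then show "A j i - z j * cnj (z i) = cnj (A i j - z i * cnj (z j))"
        using hermD[OF h, of i j] by simp
    qed
    have pos: "0 \<le> Re (qf ?n (\<lambda>i j. A i j - z i * cnj (z j)) v)" for v
    proof -
      define s' where "s' = (\<Sum>i<?n. cnj (v i) * A i N)"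
      define \<alpha> where "\<alpha> = - cnj s' / complex_of_real d"
      have s2: "(\<Sum>j<?n. A N j * v j) = cnj s'"
        unfolding s'_def cnj_sum using herm_col by (intro sum.cong) (auto simp: mult.commute)
      have ss: "(\<Sum>i<?n. cnj (v i) * z i) = s' / complex_of_real (sqrt d)"
        unfolding s'_def z_def sum_divide_distrib by (simp add: mult.assoc)
      have "qf ?n (\<lambda>i j. A i j - z i * cnj (z j)) v = qf ?n A v - s' * cnj s' / complex_of_real d"
        unfolding qf_diff qf_rank1 ss using dpos sq by (simp add: field_simps)
      also have "\<dots> = qf ?n A (\<lambda>j. v j + (if j = N then \<alpha> else 0))"
      proof -
        have e: "qf ?n A (\<lambda>j. v j + (if j = N then \<alpha> else 0)) = qf ?n A v + (\<alpha> * s' + cnj \<alpha> * cnj s' + cnj \<alpha> * \<alpha> * complex_of_real d)"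
          using qf_shift[of N ?n A v \<alpha>] unfolding s2 s'_def[symmetric] AN by (simp add: algebra_simps)
        have dne: "complex_of_real d \<noteq> 0" using dpos by simp
        have "\<alpha> * s' + cnj \<alpha> * cnj s' + cnj \<alpha> * \<alpha> * complex_of_real d = - (s' * cnj s' / complex_of_real d)"
          unfolding \<alpha>_def using dne by (simp add: field_simps)
        then show ?thesis unfolding e by simp
      qed
      finally show ?thesis using p unfolding psd_iff by simp
    qed
    show ?thesis
      by (rule that[of z]) (use herm pos Z1 Z2 in \<open>auto simp: psd_iff\<close>)
  qed
qed

lemma psd_zero: "psd 0 X"
  by (simp add: psd_iff hermitian_def qf_def)

lemma psd_rank1_schur:
  assumes "psd n Q" shows "psd n (\<lambda>i j. (z i * cnj (z j)) * Q i j)"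
proof -
  have "hermitian n (\<lambda>i j. (z i * cnj (z j)) * Q i j)"
  proof (rule hermI)
    fix i j assume "i < n" "j < n"
    then show "z j * cnj (z i) * Q j i = cnj (z i * cnj (z j) * Q i j)"
      using hermD[OF psd_herm[OF assms], of i j] by simp
  qed
  moreover have "qf n (\<lambda>i j. (z i * cnj (z j)) * Q i j) v = qf n Q (\<lambda>j. cnj (z j) * v j)" for v
    unfolding qf_def by (intro sum.cong refl) (simp add: mult_ac)
  ultimately show ?thesis using assms unfolding psd_iff by simp
qed

lemma psd_schur: "psd n A \<Longrightarrow> psd n Q \<Longrightarrow> psd n (\<lambda>i j. A i j * Q i j)"
proof (induction n arbitrary: A Q)
  case 0 then show ?case by (simp add: psd_zero)
next
  case (Suc N)
  obtain z where z: "psd (Suc N) (\<lambda>i j. A i j - z i * cnj (z j))"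
    "\<And>i. i \<le> N \<Longrightarrow> A i N - z i * cnj (z N) = 0"
    "\<And>i. i \<le> N \<Longrightarrow> A N i - z N * cnj (z i) = 0"
    using psd_decomp[OF Suc.prems(1)] by blast
  have "psd N (\<lambda>i j. (A i j - z i * cnj (z j)) * Q i j)"
    by (rule Suc.IH) (use psd_restrict z(1) Suc.prems(2) in auto)
  then have P2: "psd (Suc N) (\<lambda>i j. (A i j - z i * cnj (z j)) * Q i j)"
    by (rule psd_extend) (simp_all add: z(2,3))
  have P1: "psd (Suc N) (\<lambda>i j. (z i * cnj (z j)) * Q i j)"
    by (rule psd_rank1_schur[OF Suc.prems(2)])
  show ?case
    using psd_add[OF P2 P1] by (rule psd_cong) (simp add: algebra_simps)
qed

lemma qf_sum: "qf n (\<lambda>i j. \<Sum>k\<in>K. f k i j) v = (\<Sum>k\<in>K. qf n (f k) v)"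
  unfolding qf_def by (simp add: sum_distrib_left sum_distrib_right sum.swap[of _ K] mult_ac)

lemma cs_sum:
  fixes a b :: "nat \<Rightarrow> real"
  shows "(\<Sum>k<n. a k * b k)^2 \<le> (\<Sum>k<n. (a k)^2) * (\<Sum>k<n. (b k)^2)"
  by (rule Cauchy_Schwarz_ineq_sum)

lemma rank1_main:
  fixes z :: "nat \<Rightarrow> complex" and c :: "nat \<Rightarrow> real"
  assumes n1: "1 \<le> n" and nM: "n \<le> M" and cpos: "\<forall>j<n. c j > 0"
    and zb: "\<forall>i<n. (cmod (z i))^2 \<le> \<rho>" and rho: "0 \<le> \<rho>" and C1: "Cconst c M n \<rho> \<le> 1"
  shows "psd n (\<lambda>i j. (\<Sum>k<n. complex_of_real (c k) * (z i * cnj (z j))^k) - (z i * cnj (z j))^M)"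
proof -
  let ?u = "map z [0..<n]"
  define r where "r = sqrt \<rho>"
  have r0: "0 \<le> r" and rr: "r^2 = \<rho>" using rho by (auto simp: r_def)
  have lu: "length ?u = n" by simp
  have ub: "\<forall>y\<in>set ?u. norm y \<le> r"
  proof
    fix y assume "y \<in> set ?u"
    then obtain i where i: "i < n" "y = z i" by auto
    have "(cmod y)^2 \<le> r^2" using zb i rr by auto
    then show "norm y \<le> r" using r0 by (simp add: power_mono_iff)
  qed
  define \<beta> where "\<beta> k = beta ?u M k" for k
  have bb: "(cmod (\<beta> k))^2 \<le> real (M choose k)^2 * real ((M - k - 1) choose (n - k - 1))^2 * \<rho>^(M-k)" if k: "k < n" for k
  proof -
    have "cmod (\<beta> k) \<le> real ((M choose k) * ((M - k - 1) choose (n - k - 1))) * r^(M-k)"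
      using beta_bound[of ?u M k r] n1 nM k ub r0 by (simp add: \<beta>_def)
    then have "(cmod (\<beta> k))^2 \<le> (real ((M choose k) * ((M - k - 1) choose (n - k - 1))) * r^(M-k))^2"
      by (rule power_mono) simp
    also have "\<dots> = real (M choose k)^2 * real ((M - k - 1) choose (n - k - 1))^2 * \<rho>^(M-k)"
      by (simp add: power_mult_distrib rr[symmetric] power_mult[symmetric] mult.commute)
    finally show ?thesis .
  qed
  have herm: "hermitian n (\<lambda>i j. (\<Sum>k<n. complex_of_real (c k) * (z i * cnj (z j))^k) - (z i * cnj (z j))^M)"
    by (rule hermI) (simp add: cnj_sum mult.commute)
  have "0 \<le> Re (qf n (\<lambda>i j. (\<Sum>k<n. complex_of_real (c k) * (z i * cnj (z j))^k) - (z i * cnj (z j))^M) v)" for v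
  proof -
    define \<gamma> where "\<gamma> k = (\<Sum>i<n. cnj (v i) * z i ^ k)" for k
    have ent: "(z i * cnj (z j))^k = z i ^ k * cnj (z j ^ k)" for i j k
      by (simp add: power_mult_distrib)
    have q: "qf n (\<lambda>i j. (\<Sum>k<n. complex_of_real (c k) * (z i * cnj (z j))^k) - (z i * cnj (z j))^M) v
          = (\<Sum>k<n. complex_of_real (c k) * (\<gamma> k * cnj (\<gamma> k))) - \<gamma> M * cnj (\<gamma> M)"
      unfolding qf_diff qf_sum ent qf_scale qf_rank1 \<gamma>_def by simp
    have gM: "\<gamma> M = (\<Sum>k<n. \<beta> k * \<gamma> k)"
    proof -
      have "\<gamma> M = (\<Sum>i<n. cnj (v i) * (\<Sum>k<n. \<beta> k * z i ^ k))"
        unfolding \<gamma>_def \<beta>_def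
      proof (intro sum.cong refl)
        fix i assume "i \<in> {..<n}"
        then have "z i \<in> set ?u" by auto
        then show "cnj (v i) * z i ^ M = cnj (v i) * (\<Sum>k<n. beta ?u M k * z i ^ k)"
          using beta_root[of ?u "z i" M] n1 by simp
      qed
      also have "\<dots> = (\<Sum>i<n. \<Sum>k<n. \<beta> k * (cnj (v i) * z i ^ k))"
        by (simp add: sum_distrib_left mult_ac)
      also have "\<dots> = (\<Sum>k<n. \<Sum>i<n. \<beta> k * (cnj (v i) * z i ^ k))"
        by (rule sum.swap)
      also have "\<dots> = (\<Sum>k<n. \<beta> k * \<gamma> k)"
        by (simp add: \<gamma>_def sum_distrib_left)
      finally show ?thesis .
    qed
    define S where "S = (\<Sum>k<n. (cmod (\<beta> k))^2 / c k)"
    define G where "G = (\<Sum>k<n. c k * (cmod (\<gamma> k))^2)"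
    have S1: "S \<le> 1"
    proof -
      have "S \<le> Cconst c M n \<rho>"
        unfolding S_def Cconst_def using bb cpos by (intro sum_mono divide_right_mono) auto
      then show ?thesis using C1 by simp
    qed
    have G0: "0 \<le> G" unfolding G_def using cpos by (intro sum_nonneg) (auto intro: less_imp_le)
    have "cmod (\<gamma> M) \<le> (\<Sum>k<n. cmod (\<beta> k) * cmod (\<gamma> k))"
      unfolding gM by (rule order_trans[OF norm_sum]) (simp add: norm_mult)
    also have "\<dots> = (\<Sum>k<n. (cmod (\<beta> k) / sqrt (c k)) * (sqrt (c k) * cmod (\<gamma> k)))"
      using cpos by (intro sum.cong refl) (auto simp: field_simps)
    finally have g1: "cmod (\<gamma> M) \<le> \<dots>" .
    have "(cmod (\<gamma> M))^2 \<le> (\<Sum>k<n. (cmod (\<beta> k) / sqrt (c k)) * (sqrt (c k) * cmod (\<gamma> k)))^2"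
      by (rule power_mono[OF g1]) simp
    also have "\<dots> \<le> (\<Sum>k<n. (cmod (\<beta> k) / sqrt (c k))^2) * (\<Sum>k<n. (sqrt (c k) * cmod (\<gamma> k))^2)"
      by (rule cs_sum)
    also have "\<dots> = S * G"
      unfolding S_def G_def using cpos
      by (intro arg_cong2[where f="(*)"] sum.cong refl) (auto simp: power_divide power_mult_distrib less_imp_le)
    also have "\<dots> \<le> G" using S1 G0 by (metis mult_right_mono mult_1)
    finally have fin: "(cmod (\<gamma> M))^2 \<le> G" .
    have "Re (qf n (\<lambda>i j. (\<Sum>k<n. complex_of_real (c k) * (z i * cnj (z j))^k) - (z i * cnj (z j))^M) v)
          = G - (cmod (\<gamma> M))^2"
      unfolding q G_def complex_norm_square[symmetric] by (simp flip: of_real_power of_real_mult)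
    then show ?thesis using fin by simp
  qed
  with herm show ?thesis unfolding psd_iff by blast
qed

lemma deriv_entry:
  fixes a b :: complex
  shows "((\<lambda>w. (\<Sum>k<n. complex_of_real (c k) * (a + w*b)^k) - (a + w*b)^M) has_field_derivative
     (b * ((\<Sum>k<n. complex_of_real (c k) * of_nat k * (a + w*b)^(k-1)) - of_nat M * (a + w*b)^(M-1)))) (at w)"
proof -
  have d1: "((\<lambda>w. (a + w*b)^k) has_field_derivative (of_nat k * (a + w*b)^(k-1) * b)) (at w)" for k
    by (auto intro!: derivative_eq_intros)
  show ?thesis
    by (auto intro!: derivative_eq_intros d1 simp: sum_distrib_left algebra_simps)
qed

lemma Cconst_deriv:
  assumes cpos: "\<forall>j<Suc N. c j > 0" and M: "Suc N \<le> M" and rho: "0 \<le> \<rho>"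
  shows "Cconst (\<lambda>j. real (Suc j) * c (Suc j) / real M) (M - 1) N \<rho> \<le> Cconst c M (Suc N) \<rho>"
proof -
  obtain m where Mm: "M = Suc m" using M by (cases M) auto
  define T where "T k = real (M choose k)^2 * real ((M - k - 1) choose (Suc N - k - 1))^2 * \<rho>^(M-k) / c k" for k
  have "c 0 > 0" using cpos by auto
  then have T0: "0 \<le> T 0" unfolding T_def using rho by (intro divide_nonneg_pos) auto
  have "Cconst c M (Suc N) \<rho> = T 0 + (\<Sum>j<N. T (Suc j))"
    unfolding Cconst_def T_def by (rule sum.lessThan_Suc_shift)
  moreover have "Cconst (\<lambda>j. real (Suc j) * c (Suc j) / real M) (M - 1) N \<rho> \<le> (\<Sum>j<N. T (Suc j))"
    unfolding Cconst_def
  proof (rule sum_mono)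
    fix j assume j: "j \<in> {..<N}"
    have cj: "c (Suc j) > 0" using cpos j by auto
    define X where "X = real ((m - j - 1) choose (N - j - 1))^2 * \<rho>^(m-j) / c (Suc j)"
    have X0: "0 \<le> X" unfolding X_def using cj rho by auto
    have bin: "real (Suc m choose Suc j) * real (Suc j) = real (Suc m) * real (m choose j)"
    proof -
      have "(Suc m choose Suc j) * Suc j = Suc m * (m choose j)"
        using Suc_times_binomial_eq[of m j] by (simp only: mult.commute)
      then have "real ((Suc m choose Suc j) * Suc j) = real (Suc m * (m choose j))" by (simp only:)
      then show ?thesis by (simp only: of_nat_mult)
    qed
    have jm: "real (Suc j) \<le> real (Suc m)" using j M Mm by simp
    have "real (m choose j)^2 * (real (Suc m) / real (Suc j))
        \<le> real (m choose j)^2 * (real (Suc m) / real (Suc j))^2"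
    proof (intro mult_left_mono)
      have q1: "1 \<le> real (Suc m) / real (Suc j)" using jm by simp
      have "real (Suc m) / real (Suc j) * 1 \<le> real (Suc m) / real (Suc j) * (real (Suc m) / real (Suc j))"
        using q1 by (intro mult_left_mono) auto
      then show "real (Suc m) / real (Suc j) \<le> (real (Suc m) / real (Suc j))^2"
        by (simp add: power2_eq_square)
    qed simp
    also have "\<dots> = real (Suc m choose Suc j)^2"
    proof -
      have B1: "real (Suc m choose Suc j) = real (Suc m) * real (m choose j) / real (Suc j)"
        using bin by (simp add: field_simps del: binomial_Suc_Suc of_nat_Suc)
      show ?thesis unfolding B1 by (simp add: power2_eq_square field_simps del: of_nat_Suc)
    qed
    finally have key: "real (m choose j)^2 * (real (Suc m) / real (Suc j)) \<le> real (Suc m choose Suc j)^2" .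
    have lhs: "real ((M - 1) choose j)^2 * real ((M - 1 - j - 1) choose (N - j - 1))^2 * \<rho>^(M - 1 - j) /
          (real (Suc j) * c (Suc j) / real M) = real (m choose j)^2 * (real (Suc m) / real (Suc j)) * X"
      unfolding X_def Mm using cj by (simp add: field_simps)
    have rhs: "T (Suc j) = real (Suc m choose Suc j)^2 * X"
      unfolding T_def X_def Mm by simp
    show "real ((M - 1) choose j)^2 * real ((M - 1 - j - 1) choose (N - j - 1))^2 * \<rho>^(M - 1 - j) /
          (real (Suc j) * c (Suc j) / real M) \<le> T (Suc j)"
      unfolding lhs rhs using key X0 by (rule mult_right_mono)
  qed
  ultimately show ?thesis using T0 by linarith
qed

lemma qf_deriv:
  assumes "\<And>i j w. ((\<lambda>w. E i j w) has_field_derivative E' i j w) (at w)"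
  shows "((\<lambda>w. qf n (\<lambda>i j. E i j w) v) has_field_derivative qf n (\<lambda>i j. E' i j w) v) (at w)"
proof -
  have "((\<lambda>w. \<Sum>i<n. \<Sum>j<n. (cnj (v i) * v j) * E i j w) has_field_derivative
          (\<Sum>i<n. \<Sum>j<n. (cnj (v i) * v j) * E' i j w)) (at w)"
    by (intro DERIV_sum DERIV_cmult assms)
  then show ?thesis unfolding qf_def by (simp add: mult_ac)
qed

lemma herm_poly:
  assumes "hermitian n A"
  shows "hermitian n (\<lambda>i j. (\<Sum>k<K. complex_of_real (c k) * A i j ^ k) - A i j ^ M)"
proof (rule hermI)
  fix i j assume "i < n" "j < n"
  then show "(\<Sum>k<K. complex_of_real (c k) * A j i ^ k) - A j i ^ M = cnj ((\<Sum>k<K. complex_of_real (c k) * A i j ^ k) - A i j ^ M)"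
    using hermD[OF assms, of i j] by (simp add: cnj_sum)
qed

theorem main_ub:
  fixes \<rho> :: real
  assumes rho: "\<rho> > 0"
  shows "\<forall>M c A. N \<le> M \<longrightarrow> (\<forall>j<N. c j > 0) \<longrightarrow> Cconst c M N \<rho> \<le> 1 \<longrightarrow> PN N \<rho> A \<longrightarrow>
           psd N (\<lambda>i j. (\<Sum>k<N. complex_of_real (c k) * A i j ^ k) - A i j ^ M)"
proof (induction N)
  case 0 then show ?case by (simp add: psd_zero)
next
  case (Suc N)
  show ?case
  proof (intro allI impI)
    fix M c A
    assume M: "Suc N \<le> M" and cpos: "\<forall>j<Suc N. c j > 0" and C1: "Cconst c M (Suc N) \<rho> \<le> 1"
      and PA: "PN (Suc N) \<rho> A"
    let ?n = "Suc N"
    have psdA: "psd ?n A" and Ab: "\<And>i j. i < ?n \<Longrightarrow> j < ?n \<Longrightarrow> cmod (A i j) \<le> \<rho>"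
      using PA unfolding PN_def by auto
    obtain z where z: "psd ?n (\<lambda>i j. A i j - z i * cnj (z j))"
      "\<And>i. i \<le> N \<Longrightarrow> A i N - z i * cnj (z N) = 0"
      "\<And>i. i \<le> N \<Longrightarrow> A N i - z N * cnj (z i) = 0"
      using psd_decomp[OF psdA] by blast
    define B where "B i j = A i j - z i * cnj (z j)" for i j
    have psdB: "psd ?n B" using z(1) unfolding B_def .
    have zb: "(cmod (z i))^2 \<le> \<rho>" if i: "i < ?n" for i
    proof -
      have "0 \<le> Re (A i i) - (cmod (z i))^2"
        using psd_diag[OF z(1) i] unfolding minus_complex.sel Re_mult_cnj .
      then have "(cmod (z i))^2 \<le> Re (A i i)" by simp
      also have "\<dots> \<le> cmod (A i i)" by (rule complex_Re_le_cmod)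
      also have "\<dots> \<le> \<rho>" using Ab i by simp
      finally show ?thesis .
    qed
    have zz: "cmod (z i) * cmod (z j) \<le> \<rho>" if "i < ?n" "j < ?n" for i j
    proof -
      have "0 \<le> (cmod (z i) - cmod (z j))^2" by simp
      then have "2 * (cmod (z i) * cmod (z j)) \<le> (cmod (z i))^2 + (cmod (z j))^2"
        by (simp add: power2_diff)
      then show ?thesis using zb[OF that(1)] zb[OF that(2)] by linarith
    qed
    have M0: "0 < M" using M by simp
    define c' where "c' j = real (Suc j) * c (Suc j) / real M" for j
    define X where "X x i j = z i * cnj (z j) + complex_of_real x * B i j" for x i j
    define P where "P w = (\<Sum>k<?n. complex_of_real (c k) * w^k) - w^M" for w
    define Q where "Q x i j = (\<Sum>k<N. complex_of_real (c' k) * X x i j ^ k) - X x i j ^ (M - 1)" for x i j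
    have Pd: "(\<Sum>k<?n. complex_of_real (c k) * of_nat k * w^(k-1)) - of_nat M * w^(M-1)
        = complex_of_real (real M) * ((\<Sum>k<N. complex_of_real (c' k) * w^k) - w^(M-1))" for w
    proof -
      have "(\<Sum>k<?n. complex_of_real (c k) * of_nat k * w^(k-1)) = (\<Sum>j<N. complex_of_real (c (Suc j)) * of_nat (Suc j) * w^j)"
        by (subst sum.lessThan_Suc_shift) simp
      also have "\<dots> = complex_of_real (real M) * (\<Sum>k<N. complex_of_real (c' k) * w^k)"
        unfolding sum_distrib_left c'_def using M0 by (intro sum.cong refl) (simp add: field_simps)
      finally show ?thesis by (simp add: algebra_simps)
    qed
    have Cc': "Cconst c' (M - 1) N \<rho> \<le> 1"
      using Cconst_deriv[OF cpos M, of \<rho>] rho C1 unfolding c'_def by linarith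
    have c'pos: "\<forall>j<N. c' j > 0" unfolding c'_def using cpos M0 by auto
    have psdQ: "psd ?n (\<lambda>i j. complex_of_real (real M) * (B i j * Q x i j))" if x: "0 \<le> x" "x \<le> 1" for x
    proof -
      have psdX: "psd ?n (X x)"
        using psd_add[OF psd_rank1[of ?n z] psd_scale[OF psdB x(1)]] unfolding X_def .
      have Xb: "cmod (X x i j) \<le> \<rho>" if "i < ?n" "j < ?n" for i j
      proof -
        have "X x i j = complex_of_real (1 - x) * (z i * cnj (z j)) + complex_of_real x * A i j"
          unfolding X_def B_def by (simp add: algebra_simps)
        then have "cmod (X x i j) \<le> (1 - x) * (cmod (z i) * cmod (z j)) + x * cmod (A i j)"
          using x by (metis (no_types, lifting) abs_of_nonneg complex_cnj_mult complex_mod_cnj diff_ge_0_iff_ge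
              norm_mult norm_of_real norm_triangle_ineq)
        also have "\<dots> \<le> (1 - x) * \<rho> + x * \<rho>"
          using x zz[OF that] Ab[OF that] by (intro add_mono mult_left_mono) auto
        finally show ?thesis by (simp add: algebra_simps)
      qed
      have PX: "PN N \<rho> (X x)"
        unfolding PN_def using psd_restrict[OF psdX] Xb by auto
      have "psd N (Q x)"
        using Suc.IH[rule_format, of "M - 1" c' "X x"] M c'pos Cc' PX unfolding Q_def by auto
      then have "psd N (\<lambda>i j. B i j * Q x i j)"
        by (rule psd_schur[OF psd_restrict[OF psdB], rotated]) simp
      then have "psd ?n (\<lambda>i j. B i j * Q x i j)"
        by (rule psd_extend) (use z(2,3) in \<open>simp_all add: B_def\<close>)
      then show ?thesis by (rule psd_scale) simp
    qed
    have "0 \<le> Re (qf ?n (\<lambda>i j. P (A i j)) v)" for v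
    proof -
      define F where "F x = Re (qf ?n (\<lambda>i j. P (X x i j)) v)" for x
      define G where "G w = qf ?n (\<lambda>i j. P (z i * cnj (z j) + w * B i j)) v" for w
      define G' where "G' w = qf ?n (\<lambda>i j. B i j * ((\<Sum>k<?n. complex_of_real (c k) * of_nat k * (z i * cnj (z j) + w * B i j)^(k-1))
             - of_nat M * (z i * cnj (z j) + w * B i j)^(M-1))) v" for w
      have dG: "(G has_field_derivative G' w) (at w)" for w
        unfolding G_def G'_def P_def by (rule qf_deriv) (rule deriv_entry)
      have dF: "DERIV F x :> Re (G' (complex_of_real x))" for x
      proof -
        have "((\<lambda>x. G (complex_of_real x)) has_vector_derivative G' (complex_of_real x)) (at x)"
          by (rule has_vector_derivative_real_field[OF dG])
        from has_field_derivative_Re[OF this] show ?thesis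
          unfolding F_def G_def X_def by simp
      qed
      have dF0: "0 \<le> Re (G' (complex_of_real x))" if "0 \<le> x" "x \<le> 1" for x
      proof -
        have "G' (complex_of_real x) = qf ?n (\<lambda>i j. complex_of_real (real M) * (B i j * Q x i j)) v"
          unfolding G'_def Q_def X_def Pd by (intro arg_cong[where f="\<lambda>A. qf ?n A v"] ext) (simp add: mult_ac)
        then show ?thesis using psdQ[OF that] unfolding psd_iff by simp
      qed
      have "F 0 \<le> F 1"
        by (rule DERIV_nonneg_imp_nondecreasing[of 0 1 F]) (use dF dF0 in auto)
      moreover have "0 \<le> F 0"
      proof -
        have "psd ?n (\<lambda>i j. (\<Sum>k<?n. complex_of_real (c k) * (z i * cnj (z j))^k) - (z i * cnj (z j))^M)"
          by (rule rank1_main) (use M cpos zb rho C1 in auto)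
        then show ?thesis unfolding F_def X_def P_def psd_iff by simp
      qed
      moreover have "F 1 = Re (qf ?n (\<lambda>i j. P (A i j)) v)"
        unfolding F_def X_def B_def by simp
      ultimately show ?thesis by simp
    qed
    moreover have "hermitian ?n (\<lambda>i j. P (A i j))"
      unfolding P_def by (rule herm_poly[OF psd_herm[OF psdA]])
    ultimately show "psd ?n (\<lambda>i j. (\<Sum>k<?n. complex_of_real (c k) * A i j ^ k) - A i j ^ M)"
      unfolding psd_iff P_def by blast
  qed
qed

lemma vander_solve:
  fixes p :: "nat \<Rightarrow> complex" and g :: "nat \<Rightarrow> complex"
  assumes inj: "inj_on p {..<n}"
  shows "\<exists>w. \<forall>m<n. (\<Sum>i<n. w i * p i ^ m) = g m"
proof -
  define L where "L i = smult (1 / (\<Prod>j\<in>{..<n} - {i}. (p i - p j))) (\<Prod>j\<in>{..<n} - {i}. [:- p j, 1:])" for i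
  have Lval: "poly (L i) (p l) = (if l = i then 1 else 0)" if "i < n" "l < n" for i l
  proof (cases "l = i")
    case True
    have "(\<Prod>j\<in>{..<n} - {i}. (p i - p j)) \<noteq> 0"
      using inj that by (auto simp: inj_on_def)
    then show ?thesis using True by (simp add: L_def poly_prod)
  next
    case False
    have "(\<Prod>j\<in>{..<n} - {i}. poly [:- p j, 1:] (p l)) = 0"
      using False that by (intro prod_zero) (auto intro!: bexI[of _ l])
    then show ?thesis using False by (simp add: L_def poly_prod)
  qed
  have Ldeg: "degree (L i) \<le> n - 1" if "i < n" for i
  proof -
    have "degree (\<Prod>j\<in>{..<n} - {i}. [:- p j, (1::complex):]) \<le> (\<Sum>j\<in>{..<n} - {i}. degree [:- p j, (1::complex):])"
      using degree_prod_sum_le[of "{..<n} - {i}" "\<lambda>j. [:- p j, (1::complex):]"] by (simp add: o_def)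
    also have "\<dots> = card ({..<n} - {i})" by simp
    also have "\<dots> = n - 1" using that by simp
    finally show ?thesis unfolding L_def by (simp add: degree_smult_le order_trans[OF degree_smult_le])
  qed
  have delta: "(\<Sum>i<n. p i ^ m * coeff (L i) k) = (if k = m then 1 else 0)" if m: "m < n" for m k
  proof -
    define P where "P = monom 1 m - (\<Sum>i<n. smult (p i ^ m) (L i))"
    have roots: "poly P (p l) = 0" if "l < n" for l
    proof -
      have "(\<Sum>i<n. p i ^ m * poly (L i) (p l)) = (\<Sum>i<n. if i = l then p i ^ m else 0)"
        using that by (intro sum.cong refl) (auto simp: Lval)
      then show ?thesis using that by (simp add: P_def poly_sum poly_monom)
    qed
    have degP: "degree P \<le> n - 1"
      unfolding P_def using m Ldeg
      by (intro degree_diff_le) (auto simp: degree_monom_le intro!: degree_sum_le order_trans[OF degree_smult_le]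
          intro: order_trans[OF degree_monom_le])
    have "P = 0"
    proof (rule ccontr)
      assume P0: "P \<noteq> 0"
      have "p ` {..<n} \<subseteq> {x. poly P x = 0}" using roots by auto
      then have "card (p ` {..<n}) \<le> card {x. poly P x = 0}"
        by (intro card_mono poly_roots_finite P0)
      also have "\<dots> \<le> degree P" by (rule card_poly_roots_bound[OF P0])
      finally have "n \<le> degree P" using card_image[OF inj] by simp
      then show False using degP m by linarith
    qed
    then have "coeff P k = 0" by simp
    then have "(if m = k then 1 else 0) = (\<Sum>i<n. p i ^ m * coeff (L i) k)"
      by (simp add: P_def coeff_sum coeff_monom)
    then show ?thesis by (cases "k = m") auto
  qed
  define w where "w i = (\<Sum>k<n. g k * coeff (L i) k)" for i
  have "(\<Sum>i<n. w i * p i ^ m) = g m" if m: "m < n" for m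
  proof -
    have "(\<Sum>i<n. w i * p i ^ m) = (\<Sum>k<n. g k * (\<Sum>i<n. p i ^ m * coeff (L i) k))"
      unfolding w_def by (simp add: sum_distrib_left sum_distrib_right mult_ac) (rule sum.swap)
    also have "\<dots> = (\<Sum>k<n. if k = m then g k else 0)"
      using m by (intro sum.cong refl) (simp add: delta)
    also have "\<dots> = g m" using m by simp
    finally show ?thesis .
  qed
  then show ?thesis by blast
qed

lemma cont_ee:
  fixes g :: "real \<Rightarrow> nat \<Rightarrow> complex"
  shows "(\<And>i. continuous (at x) (\<lambda>e. g e i)) \<Longrightarrow> continuous (at x) (\<lambda>e. ee b (map (g e) xs))"
proof (induction xs arbitrary: b)
  case Nil then show ?case by simp
next
  case (Cons i xs)
  show ?case
  proof (cases b)
    case 0 then show ?thesis by simp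
  next
    case (Suc b')
    have "continuous (at x) (\<lambda>e. ee b (map (g e) xs) + g e i * ee b' (map (g e) xs))"
      using Cons by (intro continuous_intros) auto
    then show ?thesis by (simp add: Suc)
  qed
qed

lemma cont_qc:
  fixes g :: "real \<Rightarrow> nat \<Rightarrow> complex"
  shows "(\<And>i. continuous (at x) (\<lambda>e. g e i)) \<Longrightarrow> continuous (at x) (\<lambda>e. qc (map (g e) xs) k)"
  unfolding qc_def by (cases "k \<le> length xs") (auto intro!: continuous_intros cont_ee)

lemma cont_beta:
  fixes g :: "real \<Rightarrow> nat \<Rightarrow> complex"
  shows "(\<And>i. continuous (at x) (\<lambda>e. g e i)) \<Longrightarrow> continuous (at x) (\<lambda>e. beta (map (g e) xs) M k)"
proof (induction M arbitrary: k)
  case 0 then show ?case by simp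
next
  case (Suc M)
  have c1: "continuous (at x) (\<lambda>e. beta (map (g e) xs) M j)" for j using Suc by blast
  have c2: "continuous (at x) (\<lambda>e. qc (map (g e) xs) j)" for j using cont_qc Suc.prems by blast
  show ?case
    by (cases k) (auto intro!: continuous_intros c1 c2)
qed

lemma qf_rank1_poly:
  "qf n (\<lambda>i j. complex_of_real t * (\<Sum>k<K. complex_of_real (c k) * (z i * cnj (z j))^k) - (z i * cnj (z j))^M) v
   = complex_of_real t * (\<Sum>k<K. complex_of_real (c k) * ((\<Sum>i<n. cnj (v i) * z i ^ k) * cnj (\<Sum>i<n. cnj (v i) * z i ^ k)))
     - (\<Sum>i<n. cnj (v i) * z i ^ M) * cnj (\<Sum>i<n. cnj (v i) * z i ^ M)"
proof -
  have ent: "(z i * cnj (z j))^k = z i ^ k * cnj (z j ^ k)" for i j k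
    by (simp add: power_mult_distrib)
  show ?thesis
    unfolding qf_diff qf_scale qf_sum ent qf_rank1 by simp
qed

lemma beta_rep:
  assumes "1 \<le> n" "n \<le> M" "k < n"
  shows "(cmod (beta (replicate n (complex_of_real r)) M k))^2
       = real (M choose k)^2 * real ((M - k - 1) choose (n - k - 1))^2 * (r^2)^(M-k)"
proof -
  have "beta (replicate n (complex_of_real r)) M k
      = (-1)^(n - 1 - k) * TT (M - n + 1) (n - 1 - k) (replicate n (complex_of_real r))"
    using beta_T[of "replicate n (complex_of_real r)" M] assms by simp
  also have "TT (M - n + 1) (n - 1 - k) (replicate n (complex_of_real r))
     = of_nat ((M choose (M - k)) * ((M - k - 1) choose (n - 1 - k))) * (complex_of_real r)^(M-k)"
    by (rule TT_rep') (use assms in auto)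
  finally have "cmod (beta (replicate n (complex_of_real r)) M k) = real ((M choose (M - k)) * ((M - k - 1) choose (n - 1 - k))) * \<bar>r\<bar>^(M-k)"
    by (simp add: norm_mult norm_power)
  moreover have "M choose (M - k) = M choose k" using assms by (simp add: binomial_symmetric[symmetric])
  moreover have "\<bar>r\<bar>^((M - k) * 2) = r^((M - k) * 2)" by (simp add: power_even_abs)
  ultimately show ?thesis
    by (simp add: power_mult_distrib power_mult[symmetric] mult.commute)
qed

theorem sharp:
  fixes \<rho> t :: real and c :: "nat \<Rightarrow> real"
  assumes rho: "\<rho> > 0" and n1: "1 \<le> n" and nM: "n \<le> M" and cpos: "\<forall>j<n. c j > 0"
    and H: "\<forall>A. PN n \<rho> A \<longrightarrow> loewner_le n (hpow A M) (rhs n c t A)"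
  shows "Cconst c M n \<rho> \<le> t"
proof (rule ccontr)
  assume "\<not> Cconst c M n \<rho> \<le> t"
  then have tC: "t < Cconst c M n \<rho>" by simp
  define C where "C = Cconst c M n \<rho>"
  define r where "r = sqrt \<rho>"
  have r0: "0 < r" and rr: "r^2 = \<rho>" using rho by (auto simp: r_def)
  define u where "u e = map (\<lambda>i. complex_of_real (r - e * real i)) [0..<n]" for e
  define S where "S e = (\<Sum>k<n. (cmod (beta (u e) M k))^2 / c k)" for e
  have S0: "S 0 = C"
  proof -
    have u0: "u 0 = replicate n (complex_of_real r)" unfolding u_def by (simp add: map_replicate_const)
    show ?thesis unfolding S_def C_def Cconst_def u0
      using beta_rep[OF n1 nM] rr by (intro sum.cong refl) auto
  qed
  have Cpos: "0 < C"
  proof -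
    have b: "0 < (M - 1) choose (n - 1)" using n1 nM by simp
    have "0 < real (M choose 0)^2 * real ((M - 0 - 1) choose (n - 0 - 1))^2 * \<rho>^(M - 0) / c 0"
      using b rho cpos n1 by auto
    also have "\<dots> \<le> C" unfolding C_def Cconst_def
    proof (rule member_le_sum[of 0 "{..<n}" "\<lambda>j. real (M choose j)^2 * real ((M - j - 1) choose (n - j - 1))^2 * \<rho>^(M - j) / c j"])
      fix j assume j: "j \<in> {..<n} - {0}"
      then have "c j > 0" using cpos by auto
      then show "0 \<le> real (M choose j)^2 * real ((M - j - 1) choose (n - j - 1))^2 * \<rho>^(M - j) / c j"
        using rho by (intro divide_nonneg_pos) auto
    qed (use n1 in auto)
    finally show ?thesis .
  qed
  have contS: "continuous (at 0) S"
    unfolding S_def u_def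
    by (intro continuous_intros cont_beta) (auto dest!: cpos[rule_format])
  define e where "e = C - max t 0"
  have e0: "0 < e" using tC Cpos unfolding e_def C_def by auto
  obtain d where d0: "d > 0" and dS: "\<And>x. dist x 0 < d \<Longrightarrow> dist (S x) (S 0) < e"
    using contS e0 unfolding continuous_at_eps_delta by blast
  define \<epsilon> where "\<epsilon> = min (d/2) (r / (2 * real n))"
  have eps0: "0 < \<epsilon>" unfolding \<epsilon>_def using d0 r0 n1 by auto
  have "dist \<epsilon> 0 < d" using eps0 d0 unfolding \<epsilon>_def by auto
  then have "dist (S \<epsilon>) C < e" using dS S0 by metis
  then have Sbig: "max t 0 < S \<epsilon>" unfolding e_def dist_real_def by linarith
  define p where "p i = r - \<epsilon> * real i" for i
  define z where "z i = complex_of_real (p i)" for i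
  have pn: "0 < p i \<and> p i \<le> r" if "i < n" for i
  proof -
    have "\<epsilon> * real i \<le> (r / (2 * real n)) * real n"
      using that eps0 unfolding \<epsilon>_def by (intro mult_mono) auto
    also have "\<dots> = r / 2" using n1 by simp
    finally show ?thesis using r0 eps0 unfolding p_def by auto
  qed
  have injz: "inj_on z {..<n}"
    unfolding inj_on_def z_def p_def using eps0 by auto
  have uz: "u \<epsilon> = map z [0..<n]" unfolding u_def z_def p_def by simp
  define A where "A i j = z i * cnj (z j)" for i j
  have PA: "PN n \<rho> A"
    unfolding PN_def
  proof (intro conjI allI impI)
    show "psd n A" unfolding A_def by (rule psd_rank1)
    fix i j assume ij: "i < n" "j < n"
    have "cmod (A i j) = p i * p j" unfolding A_def z_def using pn[OF ij(1)] pn[OF ij(2)] by (simp add: norm_mult)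
    also have "\<dots> \<le> r * r" using pn[OF ij(1)] pn[OF ij(2)] by (intro mult_mono) auto
    also have "\<dots> = \<rho>" using rr by (simp add: power2_eq_square)
    finally show "cmod (A i j) \<le> \<rho>" .
  qed
  define \<beta> where "\<beta> k = beta (u \<epsilon>) M k" for k
  obtain w where w: "\<forall>m<n. (\<Sum>i<n. w i * z i ^ m) = cnj (\<beta> m) / complex_of_real (c m)"
    using vander_solve[OF injz, of "\<lambda>m. cnj (\<beta> m) / complex_of_real (c m)"] by blast
  define v where "v i = cnj (w i)" for i
  define \<gamma> where "\<gamma> k = (\<Sum>i<n. cnj (v i) * z i ^ k)" for k
  have \<gamma>k: "\<gamma> k = cnj (\<beta> k) / complex_of_real (c k)" if "k < n" for k
    using w that unfolding \<gamma>_def v_def by simp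
  have \<gamma>M: "\<gamma> M = (\<Sum>k<n. \<beta> k * \<gamma> k)"
  proof -
    have "\<gamma> M = (\<Sum>i<n. cnj (v i) * (\<Sum>k<n. \<beta> k * z i ^ k))"
      unfolding \<gamma>_def \<beta>_def
    proof (intro sum.cong refl)
      fix i assume "i \<in> {..<n}"
      then have "z i \<in> set (u \<epsilon>)" unfolding uz by auto
      then show "cnj (v i) * z i ^ M = cnj (v i) * (\<Sum>k<n. beta (u \<epsilon>) M k * z i ^ k)"
        using beta_root[of "u \<epsilon>" "z i" M] n1 uz by simp
    qed
    also have "\<dots> = (\<Sum>i<n. \<Sum>k<n. \<beta> k * (cnj (v i) * z i ^ k))"
      by (simp add: sum_distrib_left mult_ac)
    also have "\<dots> = (\<Sum>k<n. \<Sum>i<n. \<beta> k * (cnj (v i) * z i ^ k))"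
      by (rule sum.swap)
    also have "\<dots> = (\<Sum>k<n. \<beta> k * \<gamma> k)"
      by (simp add: \<gamma>_def sum_distrib_left)
    finally show ?thesis .
  qed
  have bb: "\<beta> k * cnj (\<beta> k) = complex_of_real ((cmod (\<beta> k))^2)" for k
    by (simp add: complex_norm_square[symmetric])
  have bb2: "\<beta> k * cnj (\<beta> k) = (complex_of_real (cmod (\<beta> k)))^2" for k
    by (metis complex_norm_square of_real_power)
  have Sdef: "S \<epsilon> = (\<Sum>k<n. (cmod (\<beta> k))^2 / c k)" unfolding S_def \<beta>_def ..
  have g1: "\<gamma> M = complex_of_real (S \<epsilon>)"
    unfolding \<gamma>M Sdef of_real_sum
    by (intro sum.cong refl) (auto simp: \<gamma>k mult_ac intro!: disjI2 bb2)
  have g2: "(\<Sum>k<n. complex_of_real (c k) * (\<gamma> k * cnj (\<gamma> k))) = complex_of_real (S \<epsilon>)"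
    unfolding Sdef of_real_sum
  proof (intro sum.cong refl)
    fix k assume "k \<in> {..<n}"
    then have ck: "c k \<noteq> 0" using cpos by force
    show "complex_of_real (c k) * (\<gamma> k * cnj (\<gamma> k)) = complex_of_real ((cmod (\<beta> k))^2 / c k)"
      using \<open>k \<in> {..<n}\<close> ck bb2[of k] by (simp add: \<gamma>k field_simps power2_eq_square)
  qed
  have "psd n (\<lambda>i j. rhs n c t A i j - hpow A M i j)"
    using H PA unfolding loewner_le_def by blast
  then have "0 \<le> Re (qf n (\<lambda>i j. rhs n c t A i j - hpow A M i j) v)"
    unfolding psd_iff by blast
  moreover have "qf n (\<lambda>i j. rhs n c t A i j - hpow A M i j) v = complex_of_real (t * S \<epsilon> - S \<epsilon> * S \<epsilon>)"
  proof -
    have "qf n (\<lambda>i j. rhs n c t A i j - hpow A M i j) v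
       = complex_of_real t * (\<Sum>k<n. complex_of_real (c k) * (\<gamma> k * cnj (\<gamma> k))) - \<gamma> M * cnj (\<gamma> M)"
      unfolding rhs_def hpow_def A_def qf_rank1_poly \<gamma>_def ..
    then show ?thesis unfolding g1 g2 by simp
  qed
  moreover have "t * S \<epsilon> - S \<epsilon> * S \<epsilon> < 0"
  proof -
    have "t * S \<epsilon> < S \<epsilon> * S \<epsilon>" using Sbig by (intro mult_strict_right_mono) auto
    then show ?thesis by (simp add: mult.commute)
  qed
  ultimately show False by simp
qed

lemma Cconst_pos:
  fixes \<rho> :: real and c :: "nat \<Rightarrow> real"
  assumes rho: "\<rho> > 0" and n1: "1 \<le> n" and nM: "n \<le> M" and cpos: "\<forall>j<n. c j > 0"
  shows "0 < Cconst c M n \<rho>"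
proof -
  have b: "0 < (M - 1) choose (n - 1)" using n1 nM by simp
  have "0 < real (M choose 0)^2 * real ((M - 0 - 1) choose (n - 0 - 1))^2 * \<rho>^(M - 0) / c 0"
    using b rho cpos n1 by auto
  also have "\<dots> \<le> Cconst c M n \<rho>" unfolding Cconst_def
  proof (rule member_le_sum[of 0 "{..<n}" "\<lambda>j. real (M choose j)^2 * real ((M - j - 1) choose (n - j - 1))^2 * \<rho>^(M - j) / c j"])
    fix j assume j: "j \<in> {..<n} - {0}"
    then have "c j > 0" using cpos by auto
    then show "0 \<le> real (M choose j)^2 * real ((M - j - 1) choose (n - j - 1))^2 * \<rho>^(M - j) / c j"
      using rho by (intro divide_nonneg_pos) auto
  qed (use n1 in auto)
  finally show ?thesis .
qed

theorem mainTheorem5: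
  fixes \<rho> :: real and M N :: nat and c :: "nat \<Rightarrow> real"
  assumes "\<rho> > 0" and "1 \<le> N" and "N \<le> M" and "\<forall>j<N. c j > 0"
  shows "(\<forall>A. PN N \<rho> A \<longrightarrow> loewner_le N (hpow A M) (rhs N c (Cconst c M N \<rho>) A))
       \<and> (\<forall>t :: real. (\<forall>A. PN N \<rho> A \<longrightarrow> loewner_le N (hpow A M) (rhs N c t A))
              \<longrightarrow> Cconst c M N \<rho> \<le> t)"
proof (intro conjI allI impI)
  fix A assume PA: "PN N \<rho> A"
  define C where "C = Cconst c M N \<rho>"
  have Cp: "0 < C" unfolding C_def using Cconst_pos assms by blast
  define c2 where "c2 k = C * c k" for k
  have c2pos: "\<forall>j<N. c2 j > 0" unfolding c2_def using Cp assms(4) by auto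
  have "Cconst c2 M N \<rho> = Cconst c M N \<rho> / C"
    unfolding Cconst_def c2_def sum_divide_distrib using Cp by (intro sum.cong refl) (simp add: field_simps)
  then have C1: "Cconst c2 M N \<rho> \<le> 1" using Cp unfolding C_def by simp
  have "psd N (\<lambda>i j. (\<Sum>k<N. complex_of_real (c2 k) * A i j ^ k) - A i j ^ M)"
    using main_ub[OF assms(1), of N] assms(3) c2pos C1 PA by blast
  then show "loewner_le N (hpow A M) (rhs N c (Cconst c M N \<rho>) A)"
    unfolding loewner_le_def
    by (rule psd_cong) (simp add: rhs_def hpow_def c2_def C_def sum_distrib_left mult.assoc)
next
  fix t assume "\<forall>A. PN N \<rho> A \<longrightarrow> loewner_le N (hpow A M) (rhs N c t A)"
  then show "Cconst c M N \<rho> \<le> t" using sharp assms by blast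
qed

end
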